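(* Let $N\ge 2$ and $M\ge 1$ be integers and $P_0,\dots,P_{N-1}\ge 0$. Let $\{s_n^{(m)}: 0\le n\le N-1,\ 1\le m\le M\}$ be independent complex random variables such that, for each $n$, $s_n^{(1)},\dots,s_n^{(M)}$ are identically distributed with $\mathbb{E}[|s_n^{(m)}|^2]=1$ and $\mathbb{E}[|s_n^{(m)}|^4]=\mu_{4,n}$. Define the averaged autocorrelation $$\overline r_k=\frac{1}{M}\sum_{m=1}^M\sum_{n=0}^{N-1}P_n|s_n^{(m)}|^2e^{j\frac{2\pi}{N}nk},\qquad k=0,\dots,N-1.$$ Then $$\mathbb{E}[|\overline r_0|^2]=\frac{1}{M}\sum_{n=0}^{N-1}P_n^2(\mu_{4,n}-1)+\Big(\sum_{n=0}^{N-1}P_n\Big)^2,$$ $$\sum_{k=1}^{N-1}\mathbb{E}[|\overline r_k|^2]=\frac{N-1}{M}\sum_{n=0}^{N-1}P_n^2(\mu_{4,n}-1)+N\sum_{n=0}^{N-1}P_n^2-\Big(\sum_{n=0}^{N-1}P_n\Big)^2,$$ and consequently the matched-filter sensing SINR for target $q$ under coherent processing of the $M$ symbols is $$\mathrm{SINR}_q^{\mathrm{MF}}=\frac{\sigma_{\alpha_q}^2\,\mathbb{E}[|\overline r_0|^2]}{\frac{\sum_{i\ne q}\sigma_{\alpha_i}^2}{N-1}\sum_{k=1}^{N-1}\mathbb{E}[|\overline r_k|^2]+\frac{\sigma_z^2}{M}\sum_{n=0}^{N-1}P_n}.$$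
   Context: Setting: a monostatic OFDM sensing system with $N$ subcarriers transmits $M$ independent OFDM symbols $x^{(m)}[t]=\frac{1}{\sqrt N}\sum_{n}\sqrt{P_n}s_n^{(m)}e^{j\frac{2\pi}{N}nt}$; the echo contains $Q$ point targets with reflection coefficients $\alpha_i\sim\mathcal{CN}(0,\sigma_{\alpha_i}^2)$ and integer delays, plus AWGN of variance $\sigma_z^2$. The receiver correlates with the known transmitted symbols (matched filtering) and averages coherently over the $M$ symbols. The matched-filter SINR of target $q$ is the expected mainlobe power $\sigma_{\alpha_q}^2\mathbb{E}[|\overline r_0|^2]$ divided by the expected interference from the other targets (whose relative delays are modeled as uniformly distributed over the nonzero lags $\{1,\dots,N-1\}$, so each contributes $\sigma_{\alpha_i}^2$ times the average of $\mathbb{E}[|\overline r_k|^2]$ over $k=1,\dots,N-1$) plus the expected filtered noise power. *)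

theory Defs
  imports "HOL-Probability.Probability"
begin

definition rbar :: "nat \<Rightarrow> nat \<Rightarrow> (nat \<Rightarrow> real) \<Rightarrow> (nat \<Rightarrow> nat \<Rightarrow> 'a \<Rightarrow> complex)
    \<Rightarrow> nat \<Rightarrow> 'a \<Rightarrow> complex" where
  "rbar N M P s k \<omega> = (1 / of_nat M) *
     (\<Sum>m\<in>{1..M}. \<Sum>n<N. of_real (P n * (cmod (s n m \<omega>))\<^sup>2)
        * exp (\<i> * of_real (2 * pi * real n * real k / real N)))"

text \<open>Arguments: E0 = E|rbar_0|^2, Ssum = sum_{k=1}^{N-1} E|rbar_k|^2,
  noise = expected filtered noise power.\<close>
definition mf_sinr :: "nat \<Rightarrow> (nat \<Rightarrow> real) \<Rightarrow> nat \<Rightarrow> nat \<Rightarrow> real \<Rightarrow> real \<Rightarrow> real \<Rightarrow> real" where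
  "mf_sinr N sa Q q E0 Ssum noise =
     sa q * E0 / ((\<Sum>i\<in>{..<Q} - {q}. sa i) / real (N - 1) * Ssum + noise)"

end

theory Submission
  imports Defs
begin


lemma cmod_sum_sq:
  fixes a :: "'i \<Rightarrow> complex" and x :: "'i \<Rightarrow> real"
  shows "(cmod (\<Sum>i\<in>I. a i * complex_of_real (x i)))\<^sup>2
     = (\<Sum>i\<in>I. \<Sum>j\<in>I. Re (a i * cnj (a j)) * (x i * x j))"
proof -
  have "complex_of_real ((cmod (\<Sum>i\<in>I. a i * complex_of_real (x i)))\<^sup>2)
      = (\<Sum>i\<in>I. a i * complex_of_real (x i)) * cnj (\<Sum>j\<in>I. a j * complex_of_real (x j))"
    by (rule complex_norm_square)
  also have "\<dots> = (\<Sum>i\<in>I. \<Sum>j\<in>I. (a i * cnj (a j)) * complex_of_real (x i * x j))"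
    apply (simp add: sum_distrib_left sum_distrib_right cnj_sum mult_ac)
    apply (subst sum.swap)
    apply (simp add: mult_ac)
    done
  finally have "(cmod (\<Sum>i\<in>I. a i * complex_of_real (x i)))\<^sup>2
      = Re (\<Sum>i\<in>I. \<Sum>j\<in>I. (a i * cnj (a j)) * complex_of_real (x i * x j))"
    by (metis Re_complex_of_real)
  then show ?thesis by (simp add: Re_sum)
qed

lemma sum_aux:
  fixes c :: "'i \<Rightarrow> 'i \<Rightarrow> real"
  assumes "finite I"
  shows "(\<Sum>i\<in>I. \<Sum>j\<in>I. c i j * (1 + (if i = j then d i else 0)))
       = (\<Sum>i\<in>I. \<Sum>j\<in>I. c i j * (1 * 1)) + (\<Sum>i\<in>I. c i i * d i)"
proof -
  have "(\<Sum>j\<in>I. c i j * (1 + (if i = j then d i else 0))) = (\<Sum>j\<in>I. c i j * (1 * 1)) + c i i * d i"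
    if "i \<in> I" for i
  proof -
    have "(\<Sum>j\<in>I. c i j * (1 + (if i = j then d i else 0)))
        = (\<Sum>j\<in>I. c i j) + (\<Sum>j\<in>I. (if i = j then c i j * d i else 0))"
    proof -
      have "\<And>j. c i j * (1 + (if i = j then d i else 0)) = c i j + (if i = j then c i j * d i else 0)"
        by (simp add: distrib_left)
      then show ?thesis by (simp add: sum.distrib)
    qed
    also have "\<dots> = (\<Sum>j\<in>I. c i j * (1 * 1)) + c i i * d i"
      using assms that by (simp add: sum.delta)
    finally show ?thesis .
  qed
  then show ?thesis by (simp add: sum.distrib)
qed

lemma (in prob_space) key:
  fixes X :: "'i \<Rightarrow> 'a \<Rightarrow> real" and a :: "'i \<Rightarrow> complex"
  assumes fin: "finite I" and ind: "indep_vars (\<lambda>_. borel) X I"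
    and meas: "\<And>i. i \<in> I \<Longrightarrow> X i \<in> borel_measurable M"
    and sq: "\<And>i. i \<in> I \<Longrightarrow> integrable M (\<lambda>\<omega>. (X i \<omega>)\<^sup>2)"
    and e1: "\<And>i. i \<in> I \<Longrightarrow> expectation (X i) = 1"
    and e2: "\<And>i. i \<in> I \<Longrightarrow> expectation (\<lambda>\<omega>. (X i \<omega>)\<^sup>2) = mu i"
  shows "expectation (\<lambda>\<omega>. (cmod (\<Sum>i\<in>I. a i * complex_of_real (X i \<omega>)))\<^sup>2)
       = (cmod (\<Sum>i\<in>I. a i))\<^sup>2 + (\<Sum>i\<in>I. (cmod (a i))\<^sup>2 * (mu i - 1))"
proof -
  have int1: "integrable M (X i)" if "i \<in> I" for i
  proof (rule Bochner_Integration.integrable_bound[where f="\<lambda>\<omega>. 1 + (X i \<omega>)\<^sup>2"])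
    show "integrable M (\<lambda>\<omega>. 1 + (X i \<omega>)\<^sup>2)" using sq[OF that] by simp
    show "X i \<in> borel_measurable M" using meas[OF that] .
    have "\<bar>y\<bar> \<le> 1 + y\<^sup>2" for y :: real
    proof -
      have "t \<le> 1 + t\<^sup>2" if "t \<ge> 0" for t :: real
      proof (cases "t \<le> 1")
        case True then show ?thesis by (simp add: add_increasing2)
      next
        case False then have "t * 1 \<le> t * t" using that by (intro mult_left_mono) auto
        then show ?thesis by (simp add: power2_eq_square)
      qed
      then show ?thesis by (metis abs_ge_zero power2_abs)
    qed
    then show "AE x in M. norm (X i x) \<le> norm (1 + (X i x)\<^sup>2)" by simp
  qed
  have E: "expectation (\<lambda>\<omega>. X i \<omega> * X j \<omega>) = (if i = j then mu i else 1)
        \<and> integrable M (\<lambda>\<omega>. X i \<omega> * X j \<omega>)" if "i \<in> I" "j \<in> I" for i j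
  proof (cases "i = j")
    case True
    then show ?thesis using e2[OF that(1)] sq[OF that(1)] by (simp add: power2_eq_square)
  next
    case False
    have ij: "indep_vars (\<lambda>_. borel) X {i, j}"
      using indep_vars_subset[OF ind] that by auto
    have i2: "\<And>k. k \<in> {i,j} \<Longrightarrow> integrable M (X k)" using int1 that by auto
    have "expectation (\<lambda>\<omega>. \<Prod>k\<in>{i,j}. X k \<omega>) = (\<Prod>k\<in>{i,j}. expectation (X k))"
      by (rule indep_vars_lebesgue_integral[OF _ ij i2]) simp
    moreover have "integrable M (\<lambda>\<omega>. \<Prod>k\<in>{i,j}. X k \<omega>)"
      by (rule indep_vars_integrable[OF _ ij i2]) simp
    ultimately show ?thesis using False e1 that by simp
  qed
  have "expectation (\<lambda>\<omega>. (cmod (\<Sum>i\<in>I. a i * complex_of_real (X i \<omega>)))\<^sup>2)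
      = expectation (\<lambda>\<omega>. \<Sum>i\<in>I. \<Sum>j\<in>I. Re (a i * cnj (a j)) * (X i \<omega> * X j \<omega>))"
    by (simp only: cmod_sum_sq)
  also have "\<dots> = (\<Sum>i\<in>I. \<Sum>j\<in>I. Re (a i * cnj (a j)) * expectation (\<lambda>\<omega>. X i \<omega> * X j \<omega>))"
    using E by (simp add: integral_sum integrable_sum)
  also have "\<dots> = (\<Sum>i\<in>I. \<Sum>j\<in>I. Re (a i * cnj (a j)) * (1 + (if i = j then mu i - 1 else 0)))"
    using E by (intro sum.cong refl) auto
  also have "\<dots> = (\<Sum>i\<in>I. \<Sum>j\<in>I. Re (a i * cnj (a j)) * (1 * 1))
       + (\<Sum>i\<in>I. Re (a i * cnj (a i)) * (mu i - 1))"
    by (rule sum_aux[OF fin])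
  also have "\<dots> = (cmod (\<Sum>i\<in>I. a i))\<^sup>2 + (\<Sum>i\<in>I. (cmod (a i))\<^sup>2 * (mu i - 1))"
    using cmod_sum_sq[of a "\<lambda>_. 1" I]
    by (simp add: complex_norm_square[symmetric] del: of_real_power)
  finally show ?thesis .
qed



definition ew :: "nat \<Rightarrow> nat \<Rightarrow> nat \<Rightarrow> complex" where
  "ew N n k = exp (\<i> * of_real (2 * pi * real n * real k / real N))"

lemma ew_prod:
  "ew N n k * cnj (ew N n' k) = exp (\<i> * of_real (2 * pi * (real n - real n') / real N)) ^ k"
proof -
  have "ew N n k * cnj (ew N n' k) = exp (\<i> * of_real (2 * pi * real n * real k / real N)
      + (- \<i> * of_real (2 * pi * real n' * real k / real N)))"
    unfolding ew_def exp_cnj exp_add by simp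
  also have "\<i> * of_real (2 * pi * real n * real k / real N)
      + (- \<i> * of_real (2 * pi * real n' * real k / real N))
      = of_nat k * (\<i> * of_real (2 * pi * (real n - real n') / real N))"
    by (cases "N = 0") (simp_all add: field_simps)
  also have "exp \<dots> = exp (\<i> * of_real (2 * pi * (real n - real n') / real N)) ^ k"
    by (rule exp_of_nat_mult)
  finally show ?thesis .
qed

lemma ew_orth:
  assumes N: "N > 0" and n: "n < N" and n': "n' < N"
  shows "(\<Sum>k<N. ew N n k * cnj (ew N n' k)) = (if n = n' then of_nat N else 0)"
proof (cases "n = n'")
  case True
  then show ?thesis by (simp add: ew_prod)
next
  case False
  define u where "u = exp (\<i> * of_real (2 * pi * (real n - real n') / real N))"
  have uN: "u ^ N = 1"
  proof -
    have "u ^ N = exp (of_nat N * (\<i> * of_real (2 * pi * (real n - real n') / real N)))"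
      unfolding u_def by (rule exp_of_nat_mult[symmetric])
    also have "of_nat N * (\<i> * of_real (2 * pi * (real n - real n') / real N))
        = \<i> * of_real (of_int (2 * (int n - int n')) * pi)"
      using N by (simp add: field_simps)
    also have "exp \<dots> = 1"
      by (subst exp_eq_1) (rule conjI, simp, rule exI[of _ "int n - int n'"], simp)
    finally show ?thesis .
  qed
  have u1: "u \<noteq> 1"
  proof
    assume "u = 1"
    then obtain m :: int where m: "2 * pi * (real n - real n') / real N = of_int (2 * m) * pi"
      unfolding u_def exp_eq_1 by auto
    then have "(2 * pi) * (real n - real n') = (2 * pi) * (of_int m * real N)"
      using N by (simp add: field_simps)
    then have "real n - real n' = of_int m * real N"
      by (subst (asm) mult_cancel_left) simp
    then have im: "int n - int n' = m * int N"
      by (metis of_int_eq_iff of_int_diff of_int_mult of_int_of_nat_eq)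
    have "m = 0"
    proof (rule ccontr)
      assume "m \<noteq> 0"
      then have "\<bar>m\<bar> \<ge> 1" by linarith
      then have "\<bar>m\<bar> * int N \<ge> 1 * int N" by (intro mult_right_mono) auto
      moreover have "\<bar>m * int N\<bar> < int N" using im n n' by linarith
      ultimately show False by (simp add: abs_mult)
    qed
    then show False using im False by simp
  qed
  have "(\<Sum>k<N. ew N n k * cnj (ew N n' k)) = (\<Sum>k<N. u ^ k)"
    by (simp add: ew_prod u_def)
  also have "\<dots> = 0"
    using u1 uN by (simp add: sum_gp_strict)
  finally show ?thesis using False by simp
qed

lemma parseval:
  assumes N: "N > 0"
  shows "(\<Sum>k<N. (cmod (\<Sum>n<N. ew N n k * complex_of_real (P n)))\<^sup>2) = real N * (\<Sum>n<N. (P n)\<^sup>2)"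
proof -
  have "(\<Sum>k<N. (cmod (\<Sum>n<N. ew N n k * complex_of_real (P n)))\<^sup>2)
      = (\<Sum>k<N. \<Sum>n<N. \<Sum>n'<N. Re (ew N n k * cnj (ew N n' k)) * (P n * P n'))"
    by (simp only: cmod_sum_sq)
  also have "\<dots> = (\<Sum>n<N. \<Sum>n'<N. Re (\<Sum>k<N. ew N n k * cnj (ew N n' k)) * (P n * P n'))"
  proof -
    have "(\<Sum>k<N. \<Sum>n<N. \<Sum>n'<N. Re (ew N n k * cnj (ew N n' k)) * (P n * P n'))
        = (\<Sum>n<N. \<Sum>k<N. \<Sum>n'<N. Re (ew N n k * cnj (ew N n' k)) * (P n * P n'))"
      by (rule sum.swap)
    also have "\<dots> = (\<Sum>n<N. \<Sum>n'<N. \<Sum>k<N. Re (ew N n k * cnj (ew N n' k)) * (P n * P n'))"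
      by (intro sum.cong refl sum.swap)
    finally show ?thesis by (simp add: Re_sum sum_distrib_right)
  qed
  also have "\<dots> = (\<Sum>n<N. \<Sum>n'<N. (if n = n' then real N * (P n * P n') else 0))"
    using N by (intro sum.cong refl) (simp add: ew_orth)
  also have "\<dots> = real N * (\<Sum>n<N. (P n)\<^sup>2)"
    by (simp add: sum.delta sum_distrib_left power2_eq_square)
  finally show ?thesis .
qed



theorem theorem1:
  fixes \<Omega> :: "'a measure" and N M Q q :: nat and P :: "nat \<Rightarrow> real"
    and s :: "nat \<Rightarrow> nat \<Rightarrow> 'a \<Rightarrow> complex" and \<mu>4 :: "nat \<Rightarrow> real"
    and \<sigma>\<alpha> :: "nat \<Rightarrow> real" and \<sigma>z2 :: real
  assumes "prob_space \<Omega>"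
    and "N \<ge> 2" and "M \<ge> 1"
    and "\<And>n. n < N \<Longrightarrow> P n \<ge> 0"
    and "\<And>n m. n < N \<Longrightarrow> m \<in> {1..M} \<Longrightarrow> s n m \<in> borel_measurable \<Omega>"
    and "prob_space.indep_vars \<Omega> (\<lambda>_. borel) (\<lambda>(n, m). s n m) ({..<N} \<times> {1..M})"
    and "\<And>n m. n < N \<Longrightarrow> m \<in> {1..M} \<Longrightarrow> distr \<Omega> borel (s n m) = distr \<Omega> borel (s n 1)"
    and "\<And>n m. n < N \<Longrightarrow> m \<in> {1..M} \<Longrightarrow> integrable \<Omega> (\<lambda>\<omega>. (cmod (s n m \<omega>)) ^ 4)"
    and "\<And>n m. n < N \<Longrightarrow> m \<in> {1..M} \<Longrightarrow> (\<integral>\<omega>. (cmod (s n m \<omega>))\<^sup>2 \<partial>\<Omega>) = 1"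
    and "\<And>n m. n < N \<Longrightarrow> m \<in> {1..M} \<Longrightarrow> (\<integral>\<omega>. (cmod (s n m \<omega>)) ^ 4 \<partial>\<Omega>) = \<mu>4 n"
  shows "(\<integral>\<omega>. (cmod (rbar N M P s 0 \<omega>))\<^sup>2 \<partial>\<Omega>)
           = 1 / real M * (\<Sum>n<N. (P n)\<^sup>2 * (\<mu>4 n - 1)) + (\<Sum>n<N. P n)\<^sup>2
       \<and> (\<Sum>k\<in>{1..N-1}. \<integral>\<omega>. (cmod (rbar N M P s k \<omega>))\<^sup>2 \<partial>\<Omega>)
           = real (N - 1) / real M * (\<Sum>n<N. (P n)\<^sup>2 * (\<mu>4 n - 1))
             + real N * (\<Sum>n<N. (P n)\<^sup>2) - (\<Sum>n<N. P n)\<^sup>2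
       \<and> mf_sinr N \<sigma>\<alpha> Q q
           (\<integral>\<omega>. (cmod (rbar N M P s 0 \<omega>))\<^sup>2 \<partial>\<Omega>)
           (\<Sum>k\<in>{1..N-1}. \<integral>\<omega>. (cmod (rbar N M P s k \<omega>))\<^sup>2 \<partial>\<Omega>)
           (\<sigma>z2 / real M * (\<Sum>n<N. P n))
         = \<sigma>\<alpha> q * (1 / real M * (\<Sum>n<N. (P n)\<^sup>2 * (\<mu>4 n - 1)) + (\<Sum>n<N. P n)\<^sup>2)
           / ((\<Sum>i\<in>{..<Q} - {q}. \<sigma>\<alpha> i) / real (N - 1)
                * (real (N - 1) / real M * (\<Sum>n<N. (P n)\<^sup>2 * (\<mu>4 n - 1))
                   + real N * (\<Sum>n<N. (P n)\<^sup>2) - (\<Sum>n<N. P n)\<^sup>2)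
              + \<sigma>z2 / real M * (\<Sum>n<N. P n))"
proof -
  interpret prob_space \<Omega> by (rule assms(1))
  define I where "I = {..<N} \<times> {1..M}"
  define X where "X = (\<lambda>i \<omega>. (cmod ((\<lambda>(n, m). s n m) i \<omega>))\<^sup>2)"
  have finI: "finite I" unfolding I_def by simp
  have ind: "indep_vars (\<lambda>_. borel) X I"
    unfolding X_def I_def
    by (rule indep_vars_compose2[OF assms(6), where Y="\<lambda>_ z. (cmod z)\<^sup>2"]) simp
  have meas: "X i \<in> borel_measurable \<Omega>" if iI: "i \<in> I" for i
  proof -
    obtain n m where i: "i = (n, m)" and nm: "n < N" "m \<in> {1..M}" using iI unfolding I_def by auto
    note [measurable] = assms(5)[OF nm]
    show ?thesis unfolding X_def i by simp
  qed
  have X4: "(X i \<omega>)\<^sup>2 = (cmod (s (fst i) (snd i) \<omega>)) ^ 4" for i \<omega>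
    unfolding X_def by (cases i) (simp add: power_mult[symmetric])
  have sq: "integrable \<Omega> (\<lambda>\<omega>. (X i \<omega>)\<^sup>2)" if "i \<in> I" for i
    using that assms(8) unfolding X4 I_def by (cases i) auto
  have e1: "expectation (X i) = 1" if "i \<in> I" for i
    using that assms(9) unfolding X_def I_def by (cases i) auto
  have e2: "expectation (\<lambda>\<omega>. (X i \<omega>)\<^sup>2) = \<mu>4 (fst i)" if "i \<in> I" for i
    using that assms(10) unfolding X4 I_def by (cases i) auto
  have M0: "real M > 0" using assms(3) by simp
  define C where "C = 1 / real M * (\<Sum>n<N. (P n)\<^sup>2 * (\<mu>4 n - 1))"
  have Ek: "expectation (\<lambda>\<omega>. (cmod (rbar N M P s k \<omega>))\<^sup>2)
      = (cmod (\<Sum>n<N. ew N n k * complex_of_real (P n)))\<^sup>2 + C" for k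
  proof -
    define a where "a = (\<lambda>(n::nat, m::nat). complex_of_real (P n / real M) * ew N n k)"
    have r: "rbar N M P s k \<omega> = (\<Sum>i\<in>I. a i * complex_of_real (X i \<omega>))" for \<omega>
    proof -
      have "(\<Sum>i\<in>I. a i * complex_of_real (X i \<omega>))
          = (\<Sum>n<N. \<Sum>m\<in>{1..M}. a (n, m) * complex_of_real (X (n, m) \<omega>))"
        unfolding I_def by (rule sum.cartesian_product')
      also have "\<dots> = (\<Sum>m\<in>{1..M}. \<Sum>n<N. a (n, m) * complex_of_real (X (n, m) \<omega>))"
        by (rule sum.swap)
      also have "\<dots> = rbar N M P s k \<omega>"
        unfolding rbar_def sum_distrib_left
        by (intro sum.cong refl) (simp add: a_def X_def ew_def)
      finally show ?thesis by simp
    qed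
    have "expectation (\<lambda>\<omega>. (cmod (rbar N M P s k \<omega>))\<^sup>2)
        = expectation (\<lambda>\<omega>. (cmod (\<Sum>i\<in>I. a i * complex_of_real (X i \<omega>)))\<^sup>2)"
      by (simp only: r)
    also have "\<dots> = (cmod (\<Sum>i\<in>I. a i))\<^sup>2 + (\<Sum>i\<in>I. (cmod (a i))\<^sup>2 * (\<mu>4 (fst i) - 1))"
      by (rule key[OF finI ind meas sq e1 e2])
    also have "(\<Sum>i\<in>I. a i) = (\<Sum>n<N. ew N n k * complex_of_real (P n))"
    proof -
      have "(\<Sum>i\<in>I. a i) = (\<Sum>n<N. \<Sum>m\<in>{1..M}. a (n, m))"
        unfolding I_def by (rule sum.cartesian_product')
      also have "\<dots> = (\<Sum>n<N. ew N n k * complex_of_real (P n))"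
        using M0 by (intro sum.cong refl) (simp add: a_def)
      finally show ?thesis .
    qed
    also have "(\<Sum>i\<in>I. (cmod (a i))\<^sup>2 * (\<mu>4 (fst i) - 1)) = C"
    proof -
      have "(\<Sum>i\<in>I. (cmod (a i))\<^sup>2 * (\<mu>4 (fst i) - 1))
          = (\<Sum>n<N. \<Sum>m\<in>{1..M}. (cmod (a (n, m)))\<^sup>2 * (\<mu>4 n - 1))"
        unfolding I_def by (subst sum.cartesian_product') simp
      also have "\<dots> = (\<Sum>n<N. 1 / real M * ((P n)\<^sup>2 * (\<mu>4 n - 1)))"
      proof (rule sum.cong[OF refl])
        fix n
        have ewn: "cmod (ew N n k) = 1" unfolding ew_def by (rule norm_exp_i_times)
        have am: "cmod (a (n, m)) = \<bar>P n\<bar> / real M" for m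
          using M0 by (simp add: a_def norm_mult norm_divide ewn del: of_real_divide)
        have "(\<Sum>m\<in>{1..M}. (cmod (a (n, m)))\<^sup>2 * (\<mu>4 n - 1))
            = real M * ((P n)\<^sup>2 / (real M)\<^sup>2 * (\<mu>4 n - 1))"
          by (simp add: am power_divide)
        also have "\<dots> = 1 / real M * ((P n)\<^sup>2 * (\<mu>4 n - 1))"
          using M0 by (simp add: field_simps power2_eq_square)
        finally show "(\<Sum>m\<in>{1..M}. (cmod (a (n, m)))\<^sup>2 * (\<mu>4 n - 1))
            = 1 / real M * ((P n)\<^sup>2 * (\<mu>4 n - 1))" .
      qed
      finally show ?thesis unfolding C_def by (simp add: sum_distrib_left)
    qed
    finally show ?thesis .
  qed
  have F0: "(cmod (\<Sum>n<N. ew N n 0 * complex_of_real (P n)))\<^sup>2 = (\<Sum>n<N. P n)\<^sup>2"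
    by (simp add: ew_def of_real_sum[symmetric] del: of_real_sum)
  have h0: "expectation (\<lambda>\<omega>. (cmod (rbar N M P s 0 \<omega>))\<^sup>2) = C + (\<Sum>n<N. P n)\<^sup>2"
    using Ek[of 0] F0 by simp
  have Nset: "{..<N} = insert 0 {1..N-1}" using assms(2) by auto
  have Nsplit: "(\<Sum>k<N. f k) = f 0 + (\<Sum>k\<in>{1..N-1}. f k)" for f :: "nat \<Rightarrow> real"
    unfolding Nset by simp
  have hsum: "(\<Sum>k\<in>{1..N-1}. expectation (\<lambda>\<omega>. (cmod (rbar N M P s k \<omega>))\<^sup>2))
      = real (N - 1) * C + real N * (\<Sum>n<N. (P n)\<^sup>2) - (\<Sum>n<N. P n)\<^sup>2"
  proof -
    have "real N * (\<Sum>n<N. (P n)\<^sup>2) = (\<Sum>k<N. (cmod (\<Sum>n<N. ew N n k * complex_of_real (P n)))\<^sup>2)"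
      using assms(2) by (intro parseval[symmetric]) simp
    also have "\<dots> = (\<Sum>n<N. P n)\<^sup>2 + (\<Sum>k\<in>{1..N-1}. (cmod (\<Sum>n<N. ew N n k * complex_of_real (P n)))\<^sup>2)"
      using Nsplit F0 by simp
    finally have "(\<Sum>k\<in>{1..N-1}. (cmod (\<Sum>n<N. ew N n k * complex_of_real (P n)))\<^sup>2)
        = real N * (\<Sum>n<N. (P n)\<^sup>2) - (\<Sum>n<N. P n)\<^sup>2" by simp
    then show ?thesis unfolding Ek using assms(2) by (simp add: sum.distrib)
  qed
  have h1: "real (N - 1) * C = real (N - 1) / real M * (\<Sum>n<N. (P n)\<^sup>2 * (\<mu>4 n - 1))"
    unfolding C_def by simp
  show ?thesis
    unfolding mf_sinr_def h0 hsum h1 C_def by simp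
qed

end
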